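(* If $L_1, L_2 \subseteq \Sigma^*$ are regular languages, then $L_1 \stackrel{\rm pgi}{\leftarrow} L_2$ and $L_1 \stackrel{\rm sgi}{\leftarrow} L_2$ are regular.
   Context: Prefix-guided insertion of a string $y$ into a string $x$: $x \stackrel{\rm pgi}{\leftarrow} y = \{ x_1 y_1 y_2 x_2 \mid x = x_1 y_1 x_2,\ y = y_1 y_2,\ y_1 \neq \varepsilon \}$. Suffix-guided insertion: $x \stackrel{\rm sgi}{\leftarrow} y = \{ x_1 y_1 y_2 x_2 \mid x = x_1 y_2 x_2,\ y = y_1 y_2,\ y_2 \neq \varepsilon \}$. Both are extended to languages by taking the union over all $x \in L_1$, $y \in L_2$. *)

theory Defs
  imports Main
begin

datatype 'a rexp =
    Zero
  | One
  | Atom 'a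
  | Plus "'a rexp" "'a rexp"
  | Times "'a rexp" "'a rexp"
  | Star "'a rexp"

definition conc :: "'a list set \<Rightarrow> 'a list set \<Rightarrow> 'a list set" where
  "conc A B = {xs @ ys | xs ys. xs \<in> A \<and> ys \<in> B}"

inductive_set star :: "'a list set \<Rightarrow> 'a list set" for A :: "'a list set" where
  star_Nil: "[] \<in> star A"
| star_app: "\<lbrakk> u \<in> A; v \<in> star A \<rbrakk> \<Longrightarrow> u @ v \<in> star A"

fun lang :: "'a rexp \<Rightarrow> 'a list set" where
  "lang Zero = {}"
| "lang One = {[]}"
| "lang (Atom a) = {[a]}"
| "lang (Plus r s) = lang r \<union> lang s"
| "lang (Times r s) = conc (lang r) (lang s)"
| "lang (Star r) = star (lang r)"

definition regular :: "'a list set \<Rightarrow> bool" where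
  "regular L \<longleftrightarrow> (\<exists>r. lang r = L)"

definition pgi :: "'a list \<Rightarrow> 'a list \<Rightarrow> 'a list set" where
  "pgi x y = {x1 @ y1 @ y2 @ x2 | x1 y1 y2 x2.
                x = x1 @ y1 @ x2 \<and> y = y1 @ y2 \<and> y1 \<noteq> []}"

definition sgi :: "'a list \<Rightarrow> 'a list \<Rightarrow> 'a list set" where
  "sgi x y = {x1 @ y1 @ y2 @ x2 | x1 y1 y2 x2.
                x = x1 @ y2 @ x2 \<and> y = y1 @ y2 \<and> y2 \<noteq> []}"

definition pgi_lang :: "'a list set \<Rightarrow> 'a list set \<Rightarrow> 'a list set" where
  "pgi_lang L1 L2 = (\<Union>x\<in>L1. \<Union>y\<in>L2. pgi x y)"

definition sgi_lang :: "'a list set \<Rightarrow> 'a list set \<Rightarrow> 'a list set" where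
  "sgi_lang L1 L2 = (\<Union>x\<in>L1. \<Union>y\<in>L2. sgi x y)"

end

theory Submission
  imports Defs
begin

lemma reg_empty: "regular {}" unfolding regular_def by (rule exI[of _ Zero]) simp
lemma reg_eps: "regular {[]}" unfolding regular_def by (rule exI[of _ One]) simp
lemma reg_atom: "regular {[a]}" unfolding regular_def by (rule exI[of _ "Atom a"]) simp
lemma reg_Un: "regular A \<Longrightarrow> regular B \<Longrightarrow> regular (A \<union> B)"
  unfolding regular_def by (metis lang.simps(4))
lemma reg_conc: "regular A \<Longrightarrow> regular B \<Longrightarrow> regular (conc A B)"
  unfolding regular_def by (metis lang.simps(5))
lemma reg_star: "regular A \<Longrightarrow> regular (star A)"
  unfolding regular_def by (metis lang.simps(6))

lemma reg_UN: "finite I \<Longrightarrow> (\<And>i. i \<in> I \<Longrightarrow> regular (F i)) \<Longrightarrow> regular (\<Union>i\<in>I. F i)"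
proof (induction I rule: finite_induct)
  case empty then show ?case by (simp add: reg_empty)
next
  case (insert x F) then show ?case by (simp add: reg_Un)
qed

lemma reg_word: "regular {w}"
proof (induction w)
  case Nil then show ?case by (rule reg_eps)
next
  case (Cons a w)
  have "{a # w} = conc {[a]} {w}" by (auto simp: conc_def)
  then show ?case using reg_conc[OF reg_atom Cons] by simp
qed

lemma reg_finite: "finite A \<Longrightarrow> regular A"
proof -
  assume "finite A"
  have "regular (\<Union>w\<in>A. {w})" by (rule reg_UN[OF \<open>finite A\<close>]) (rule reg_word)
  then show ?thesis by simp
qed

lemma star_single: "u \<in> A \<Longrightarrow> u \<in> star A"
  using star.star_app[OF _ star.star_Nil] by fastforce

lemma star_append: "u \<in> star A \<Longrightarrow> v \<in> star A \<Longrightarrow> u @ v \<in> star A"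
  by (induction u rule: star.induct) (auto intro: star.star_app)

lemma concI: "x \<in> A \<Longrightarrow> y \<in> B \<Longrightarrow> x @ y \<in> conc A B"
  by (auto simp: conc_def)

section \<open>Kleene for DFAs\<close>

inductive Wp :: "('s \<Rightarrow> 'a \<Rightarrow> 's) \<Rightarrow> 's set \<Rightarrow> 's \<Rightarrow> 's \<Rightarrow> 'a list \<Rightarrow> bool"
  for f :: "'s \<Rightarrow> 'a \<Rightarrow> 's" and S :: "'s set" where
  "Wp f S i i []"
| "f i a = j \<Longrightarrow> Wp f S i j [a]"
| "Wp f S i k u \<Longrightarrow> k \<in> S \<Longrightarrow> Wp f S k j v \<Longrightarrow> Wp f S i j (u @ v)"

definition W :: "('s \<Rightarrow> 'a \<Rightarrow> 's) \<Rightarrow> 's set \<Rightarrow> 's \<Rightarrow> 's \<Rightarrow> 'a list set" where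
  "W f S i j = {u. Wp f S i j u}"

lemma W_eps: "[] \<in> W f S i i" by (simp add: W_def Wp.intros)
lemma W_let: "f i a = j \<Longrightarrow> [a] \<in> W f S i j" by (simp add: W_def Wp.intros)
lemma Wc: "u \<in> W f S i k \<Longrightarrow> k \<in> S \<Longrightarrow> v \<in> W f S k j \<Longrightarrow> u @ v \<in> W f S i j"
  by (simp add: W_def Wp.intros)
lemmas W_intros = W_eps W_let Wc

lemma W_induct[consumes 1, case_names W_eps W_let W_comp]:
  assumes "u \<in> W f S i j"
    and "\<And>i. P i i []"
    and "\<And>i a j. f i a = j \<Longrightarrow> P i j [a]"
    and "\<And>u i k v j. u \<in> W f S i k \<Longrightarrow> P i k u \<Longrightarrow> k \<in> S \<Longrightarrow> v \<in> W f S k j \<Longrightarrow> P k j v \<Longrightarrow> P i j (u @ v)"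
  shows "P i j u"
  using assms(1) unfolding W_def mem_Collect_eq
  by (induction rule: Wp.induct) (auto intro: assms(2-4) simp: W_def)

lemma W_mono: "u \<in> W f S i j \<Longrightarrow> S \<subseteq> T \<Longrightarrow> u \<in> W f T i j"
  by (induction rule: W_induct) (auto intro: W_intros)

lemma W_empty: "W f {} i j \<subseteq> {[]} \<union> range (\<lambda>a. [a])"
proof
  fix u assume "u \<in> W f {} i j"
  then show "u \<in> {[]} \<union> range (\<lambda>a. [a])" by (induction rule: W_induct) auto
qed

lemma W_star: "w \<in> star (W f S k k) \<Longrightarrow> k \<in> S \<Longrightarrow> w \<in> W f S k k"
  by (induction rule: star.induct) (auto intro: W_intros)

lemma W_insert_sup:
  "W f S i j \<union> conc (W f S i k) (conc (star (W f S k k)) (W f S k j)) \<subseteq> W f (insert k S) i j"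
proof -
  have m: "\<And>i j. W f S i j \<subseteq> W f (insert k S) i j" by (auto intro: W_mono)
  show ?thesis
  proof
    fix w assume "w \<in> W f S i j \<union> conc (W f S i k) (conc (star (W f S k k)) (W f S k j))"
    then show "w \<in> W f (insert k S) i j"
    proof
      assume "w \<in> W f S i j" then show ?thesis using m by blast
    next
      assume "w \<in> conc (W f S i k) (conc (star (W f S k k)) (W f S k j))"
      then obtain a c b where w: "w = a @ c @ b" and a: "a \<in> W f S i k"
        and c: "c \<in> star (W f S k k)" and b: "b \<in> W f S k j" by (auto simp: conc_def)
      have "c \<in> star (W f (insert k S) k k)"
        using c by (induction rule: star.induct) (auto intro: star.intros W_mono)
      then have c': "c \<in> W f (insert k S) k k" by (rule W_star) simp
      have "c @ b \<in> W f (insert k S) k j" using Wc[OF c' _ W_mono[OF b]] by auto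
      then show ?thesis using Wc[OF W_mono[OF a] _ , of "insert k S" "c @ b"] w by auto
    qed
  qed
qed

lemma W_insert_sub:
  assumes "w \<in> W f (insert k S) i j"
  shows "w \<in> W f S i j \<union> conc (W f S i k) (conc (star (W f S k k)) (W f S k j))"
  using assms
proof (induction rule: W_induct)
  case (W_eps i) then show ?case by (auto intro: W_intros)
next
  case (W_let i a j) then show ?case by (auto intro: W_intros)
next
  case (W_comp u i m v j)
  let ?C = "star (W f S k k)"
  have L: "\<And>i x. x \<in> W f S i k \<union> conc (W f S i k) (conc ?C (W f S k k)) \<Longrightarrow> x \<in> conc (W f S i k) ?C"
  proof -
    fix i x assume "x \<in> W f S i k \<union> conc (W f S i k) (conc ?C (W f S k k))"
    then show "x \<in> conc (W f S i k) ?C"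
    proof
      assume "x \<in> W f S i k" then show ?thesis unfolding conc_def
        by (metis (mono_tags, lifting) append.right_neutral mem_Collect_eq star.star_Nil)
    next
      assume "x \<in> conc (W f S i k) (conc ?C (W f S k k))"
      then obtain a c b where "x = a @ c @ b" "a \<in> W f S i k" "c \<in> ?C" "b \<in> W f S k k"
        by (auto simp: conc_def)
      moreover have "c @ b \<in> ?C" using star_append[OF calculation(3) star_single[OF calculation(4)]] .
      ultimately show ?thesis by (auto simp: conc_def)
    qed
  qed
  have R: "\<And>j x. x \<in> W f S k j \<union> conc (W f S k k) (conc ?C (W f S k j)) \<Longrightarrow> x \<in> conc ?C (W f S k j)"
  proof -
    fix j x assume "x \<in> W f S k j \<union> conc (W f S k k) (conc ?C (W f S k j))"
    then show "x \<in> conc ?C (W f S k j)"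
    proof
      assume "x \<in> W f S k j" then show ?thesis unfolding conc_def
        by (metis (mono_tags, lifting) append_Nil mem_Collect_eq star.star_Nil)
    next
      assume "x \<in> conc (W f S k k) (conc ?C (W f S k j))"
      then obtain a c b where "x = a @ c @ b" "a \<in> W f S k k" "c \<in> ?C" "b \<in> W f S k j"
        by (auto simp: conc_def)
      moreover have "a @ c \<in> ?C" using star_append[OF star_single[OF calculation(2)] calculation(3)] .
      ultimately show ?thesis unfolding conc_def by (metis (mono_tags, lifting) append.assoc mem_Collect_eq)
    qed
  qed
  show ?case
  proof (cases "m = k")
    case True
    obtain a c where u: "u = a @ c" "a \<in> W f S i k" "c \<in> ?C"
      using L[of u i] W_comp.IH(1) True by (auto simp: conc_def)
    obtain c' b where v: "v = c' @ b" "c' \<in> ?C" "b \<in> W f S k j"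
      using R[of v j] W_comp.IH(2) True by (auto simp: conc_def)
    have "c @ c' \<in> ?C" using star_append[OF u(3) v(2)] .
    then have "a @ ((c @ c') @ b) \<in> conc (W f S i k) (conc ?C (W f S k j))"
      using u v by (intro concI) auto
    then have "u @ v \<in> conc (W f S i k) (conc ?C (W f S k j))" using u v by simp
    then show ?thesis by blast
  next
    case False
    then have mS: "m \<in> S" using W_comp.hyps(2) by simp
    show ?thesis
      using W_comp.IH(1)
    proof
      assume u: "u \<in> W f S i m"
      show ?thesis using W_comp.IH(2)
      proof
        assume "v \<in> W f S m j" then show ?thesis using Wc[OF u mS] by blast
      next
        assume "v \<in> conc (W f S m k) (conc ?C (W f S k j))"
        then obtain a c b where "v = a @ c @ b" "a \<in> W f S m k" "c \<in> ?C" "b \<in> W f S k j"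
          by (auto simp: conc_def)
        moreover have "u @ a \<in> W f S i k" using Wc[OF u mS] calculation by blast
        ultimately have "(u @ a) @ (c @ b) \<in> conc (W f S i k) (conc ?C (W f S k j))"
          by (intro concI) auto
        then show ?thesis using \<open>v = a @ c @ b\<close> by simp
      qed
    next
      assume "u \<in> conc (W f S i k) (conc ?C (W f S k m))"
      then obtain a c b where u: "u = a @ c @ b" "a \<in> W f S i k" "c \<in> ?C" "b \<in> W f S k m"
        by (auto simp: conc_def)
      show ?thesis using W_comp.IH(2)
      proof
        assume "v \<in> W f S m j"
        then have "b @ v \<in> W f S k j" using Wc[OF u(4) mS] by blast
        then have "a @ (c @ (b @ v)) \<in> conc (W f S i k) (conc ?C (W f S k j))"
          using u by (intro concI) auto
        then show ?thesis using u by simp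
      next
        assume "v \<in> conc (W f S m k) (conc ?C (W f S k j))"
        then obtain a' c' b' where v: "v = a' @ c' @ b'" "a' \<in> W f S m k" "c' \<in> ?C" "b' \<in> W f S k j"
          by (auto simp: conc_def)
        have "b @ a' \<in> W f S k k" using Wc[OF u(4) mS v(2)] .
        then have "b @ a' \<in> ?C" by (rule star_single)
        then have "(b @ a') @ c' \<in> ?C" using v(3) by (rule star_append)
        then have "c @ (b @ a') @ c' \<in> ?C" using star_append[OF u(3)] by blast
        then have "a @ ((c @ (b @ a') @ c') @ b') \<in> conc (W f S i k) (conc ?C (W f S k j))"
          using u v by (intro concI) auto
        then show ?thesis using u v by simp
      qed
    qed
  qed
qed

lemma W_insert:
  "W f (insert k S) i j = W f S i j \<union> conc (W f S i k) (conc (star (W f S k k)) (W f S k j))"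
  apply (rule equalityI)
   apply (rule subsetI)
   apply (erule W_insert_sub)
  apply (rule W_insert_sup)
  done

lemma W_regular:
  fixes f :: "'s \<Rightarrow> 'a::finite \<Rightarrow> 's"
  assumes "finite S"
  shows "regular (W f S i j)"
  using assms
proof (induction S arbitrary: i j rule: finite_induct)
  case empty
  have "finite ({[]} \<union> range (\<lambda>a::'a. [a]))" by simp
  then show ?case using W_empty by (metis finite_subset reg_finite)
next
  case (insert k S)
  then show ?case by (simp add: W_insert reg_Un reg_conc reg_star)
qed

lemma W_foldl: "u \<in> W f S i j \<Longrightarrow> foldl f i u = j"
  by (induction rule: W_induct) auto

lemma foldl_W: "range (foldl f i) \<subseteq> S \<Longrightarrow> w \<in> W f S i (foldl f i w)"
proof (induction w rule: rev_induct)
  case Nil then show ?case by (simp add: W_eps)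
next
  case (snoc a w)
  have "foldl f i w \<in> S" using snoc.prems by auto
  from Wc[OF snoc.IH[OF snoc.prems] this W_let[OF refl]] show ?case by simp
qed

lemma kleene:
  fixes f :: "'s \<Rightarrow> 'a::finite \<Rightarrow> 's"
  assumes "finite (range (foldl f i))"
  shows "regular {w. foldl f i w = j}"
proof -
  have "{w. foldl f i w = j} = W f (range (foldl f i)) i j"
  proof (intro equalityI subsetI)
    fix w assume "w \<in> {w. foldl f i w = j}"
    then show "w \<in> W f (range (foldl f i)) i j"
      using foldl_W[of f i "range (foldl f i)", OF order_refl, of w] by simp
  next
    fix w assume "w \<in> W f (range (foldl f i)) i j"
    then show "w \<in> {w. foldl f i w = j}" using W_foldl by simp
  qed
  then show ?thesis using W_regular[OF assms] by simp
qed

lemma kleene_ne: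
  fixes f :: "'s \<Rightarrow> 'a::finite \<Rightarrow> 's"
  assumes "finite (range (foldl f i))"
  shows "regular ({w. foldl f i w = j} - {[]})"
proof -
  have eq: "{w. foldl f i w = j} - {[]} = (\<Union>a\<in>UNIV. conc {[a]} {w. foldl f (f i a) w = j})"
    by (auto simp: conc_def neq_Nil_conv) (metis list.exhaust)
  have "\<And>a. range (foldl f (f i a)) \<subseteq> range (foldl f i)"
    by (auto, metis foldl_Cons rangeI)
  then have fin: "\<And>a. finite (range (foldl f (f i a)))" using assms finite_subset by blast
  show ?thesis unfolding eq
  proof (rule reg_UN)
    show "finite (UNIV :: 'a set)" by simp
  next
    fix a show "regular (conc {[a]} {w. foldl f (f i a) w = j})"
      by (rule reg_conc[OF reg_atom kleene[OF fin]])
  qed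
qed

section \<open>Quotients\<close>

definition Deriv :: "'a list \<Rightarrow> 'a list set \<Rightarrow> 'a list set" where
  "Deriv w L = {v. w @ v \<in> L}"

definition Qs :: "'a list set \<Rightarrow> 'a list set set" where
  "Qs L = range (\<lambda>w. Deriv w L)"

lemma Deriv_append: "Deriv (u @ v) L = Deriv v (Deriv u L)"
  by (auto simp: Deriv_def)

lemma Deriv_Nil[simp]: "Deriv [] L = L" by (simp add: Deriv_def)

definition dd :: "'a list set \<Rightarrow> 'a \<Rightarrow> 'a list set" where
  "dd X a = Deriv [a] X"

lemma foldl_dd: "foldl dd X w = Deriv w X"
  by (induction w arbitrary: X) (simp_all add: dd_def Deriv_def)

lemma Qs_Deriv: "Qs (Deriv u X) \<subseteq> Qs X"
  unfolding Qs_def by (auto simp: Deriv_append[symmetric])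

lemma Deriv_conc:
  "Deriv w (conc A B) = conc (Deriv w A) B \<union> \<Union>{Deriv v B | u v. w = u @ v \<and> u \<in> A}"
proof (intro equalityI subsetI)
  fix x assume "x \<in> Deriv w (conc A B)"
  then obtain p q where pq: "w @ x = p @ q" "p \<in> A" "q \<in> B" by (auto simp: Deriv_def conc_def)
  then obtain us where "(w = p @ us \<and> us @ x = q) \<or> (w @ us = p \<and> x = us @ q)"
    by (auto simp: append_eq_append_conv2)
  then show "x \<in> conc (Deriv w A) B \<union> \<Union>{Deriv v B | u v. w = u @ v \<and> u \<in> A}"
  proof
    assume h: "w = p @ us \<and> us @ x = q"
    then have "x \<in> Deriv us B" using pq by (simp add: Deriv_def)
    then show ?thesis using h pq by blast
  next
    assume h: "w @ us = p \<and> x = us @ q"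
    then have "us \<in> Deriv w A" using pq by (simp add: Deriv_def)
    then show ?thesis using h pq by (auto intro: concI)
  qed
next
  fix x assume "x \<in> conc (Deriv w A) B \<union> \<Union>{Deriv v B | u v. w = u @ v \<and> u \<in> A}"
  then show "x \<in> Deriv w (conc A B)"
  proof
    assume "x \<in> conc (Deriv w A) B"
    then obtain p q where "x = p @ q" "w @ p \<in> A" "q \<in> B" by (auto simp: conc_def Deriv_def)
    then have "(w @ p) @ q \<in> conc A B" by (intro concI)
    then show ?thesis using \<open>x = p @ q\<close> by (simp add: Deriv_def)
  next
    assume "x \<in> \<Union>{Deriv v B | u v. w = u @ v \<and> u \<in> A}"
    then obtain u v where "w = u @ v" "u \<in> A" "v @ x \<in> B" by (auto simp: Deriv_def)
    then have "u @ (v @ x) \<in> conc A B" by (intro concI)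
    then show ?thesis using \<open>w = u @ v\<close> by (simp add: Deriv_def)
  qed
qed

lemma star_split:
  assumes "z \<in> star A"
  shows "z = w @ x \<Longrightarrow> w \<noteq> [] \<Longrightarrow>
    \<exists>u v y r. w = u @ v \<and> u \<in> star A \<and> v \<noteq> [] \<and> v @ y \<in> A \<and> x = y @ r \<and> r \<in> star A"
  using assms
proof (induction z arbitrary: w x rule: star.induct)
  case star_Nil then show ?case by simp
next
  case (star_app u0 v0 w x)
  from star_app.prems(1) obtain us where
    "(w = u0 @ us \<and> us @ x = v0) \<or> (w @ us = u0 \<and> x = us @ v0)"
    by (auto simp: append_eq_append_conv2)
  then show ?case
  proof
    assume h: "w = u0 @ us \<and> us @ x = v0"
    show ?thesis
    proof (cases "us = []")
      case True
      have "w = [] @ u0" "[] \<in> star A" "u0 \<noteq> []" "u0 @ [] \<in> A" "x = [] @ v0"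
        using h True star_app by (auto intro: star.star_Nil)
      then show ?thesis using star_app.hyps(2) by blast
    next
      case False
      from star_app.IH[of us x] h False obtain u v y r where
        "us = u @ v" "u \<in> star A" "v \<noteq> []" "v @ y \<in> A" "x = y @ r" "r \<in> star A" by blast
      moreover have "u0 @ u \<in> star A" using star_app.hyps(1) calculation(2) by (rule star.star_app)
      moreover have "w = (u0 @ u) @ v" using h calculation(1) by simp
      ultimately show ?thesis by blast
    qed
  next
    assume h: "w @ us = u0 \<and> x = us @ v0"
    have "w = [] @ w" "[] \<in> star A" "w @ us \<in> A" using h star_app by (auto intro: star.star_Nil)
    then show ?thesis using h star_app.hyps(2) star_app.prems(2) by blast
  qed
qed

lemma Deriv_star:
  assumes "w \<noteq> []"
  shows "Deriv w (star A) = conc (\<Union>{Deriv v A | u v. w = u @ v \<and> u \<in> star A \<and> v \<noteq> []}) (star A)"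
proof
  show "Deriv w (star A) \<subseteq> conc (\<Union>{Deriv v A | u v. w = u @ v \<and> u \<in> star A \<and> v \<noteq> []}) (star A)"
  proof
    fix x assume "x \<in> Deriv w (star A)"
    then have "w @ x \<in> star A" by (simp add: Deriv_def)
    from star_split[OF this refl assms] obtain u v y r where
      h: "w = u @ v" "u \<in> star A" "v \<noteq> []" "v @ y \<in> A" "x = y @ r" "r \<in> star A" by blast
    have "y \<in> Deriv v A" using h by (simp add: Deriv_def)
    then have "y \<in> \<Union>{Deriv v A | u v. w = u @ v \<and> u \<in> star A \<and> v \<noteq> []}" using h by blast
    then show "x \<in> conc (\<Union>{Deriv v A | u v. w = u @ v \<and> u \<in> star A \<and> v \<noteq> []}) (star A)"
      using h(5,6) by (simp add: concI)
  qed
next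
  show "conc (\<Union>{Deriv v A | u v. w = u @ v \<and> u \<in> star A \<and> v \<noteq> []}) (star A) \<subseteq> Deriv w (star A)"
  proof
    fix x assume "x \<in> conc (\<Union>{Deriv v A | u v. w = u @ v \<and> u \<in> star A \<and> v \<noteq> []}) (star A)"
    then obtain y z u v where h: "x = y @ z" "z \<in> star A" "w = u @ v" "u \<in> star A" "v @ y \<in> A"
      by (auto simp: conc_def Deriv_def)
    have "(v @ y) @ z \<in> star A" using star.star_app[OF h(5,2)] .
    then have "u @ ((v @ y) @ z) \<in> star A" using star_append[OF h(4)] by blast
    then show "x \<in> Deriv w (star A)" using h by (simp add: Deriv_def)
  qed
qed

lemma finite_Qs: "finite (Qs (lang r))"
proof (induction r)
  case Zero
  have "Qs (lang Zero) \<subseteq> {{}}" by (auto simp: Qs_def Deriv_def)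
  then show ?case using finite_subset by blast
next
  case One
  have "Qs (lang One) \<subseteq> {{[]}, {}}" by (auto simp: Qs_def Deriv_def)
  then show ?case using finite_subset by blast
next
  case (Atom a)
  have "\<And>w. Deriv w {[a]} \<in> {{[a]}, {[]}, {}}"
  proof -
    fix w :: "'a list"
    show "Deriv w {[a]} \<in> {{[a]}, {[]}, {}}"
      by (cases w; cases "tl w") (auto simp: Deriv_def)
  qed
  then have "Qs (lang (Atom a)) \<subseteq> {{[a]}, {[]}, {}}" by (auto simp: Qs_def)
  then show ?case using finite_subset by blast
next
  case (Plus r s)
  have "Qs (lang (Plus r s)) \<subseteq> (\<lambda>(X, Y). X \<union> Y) ` (Qs (lang r) \<times> Qs (lang s))"
  proof
    fix X assume "X \<in> Qs (lang (Plus r s))"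
    then obtain w where "X = Deriv w (lang r \<union> lang s)" by (auto simp: Qs_def)
    then have "X = Deriv w (lang r) \<union> Deriv w (lang s)" by (auto simp: Deriv_def)
    then show "X \<in> (\<lambda>(X, Y). X \<union> Y) ` (Qs (lang r) \<times> Qs (lang s))"
      by (auto simp: Qs_def)
  qed
  then show ?case using Plus finite_subset by blast
next
  case (Times r s)
  let ?B = "lang s"
  have "Qs (lang (Times r s)) \<subseteq> (\<lambda>(X, Y). conc X ?B \<union> \<Union>Y) ` (Qs (lang r) \<times> Pow (Qs ?B))"
  proof
    fix X assume "X \<in> Qs (lang (Times r s))"
    then obtain w where "X = Deriv w (conc (lang r) ?B)" by (auto simp: Qs_def)
    then have X: "X = conc (Deriv w (lang r)) ?B \<union> \<Union>{Deriv v ?B | u v. w = u @ v \<and> u \<in> lang r}"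
      by (simp add: Deriv_conc)
    have 1: "{Deriv v ?B | u v. w = u @ v \<and> u \<in> lang r} \<in> Pow (Qs ?B)" by (auto simp: Qs_def)
    have 2: "Deriv w (lang r) \<in> Qs (lang r)" by (auto simp: Qs_def)
    show "X \<in> (\<lambda>(X, Y). conc X ?B \<union> \<Union>Y) ` (Qs (lang r) \<times> Pow (Qs ?B))"
      unfolding X
      by (rule image_eqI[of _ _ "(Deriv w (lang r), {Deriv v ?B | u v. w = u @ v \<and> u \<in> lang r})"])
        (simp, use 1 2 in blast)
  qed
  then show ?case by (rule finite_subset) (simp add: Times.IH)
next
  case (Star r)
  let ?A = "lang r"
  have sub: "Qs (lang (Star r)) \<subseteq> insert (star ?A) ((\<lambda>Y. conc (\<Union>Y) (star ?A)) ` Pow (Qs ?A))"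
  proof
    fix X assume "X \<in> Qs (lang (Star r))"
    then obtain w where X: "X = Deriv w (star ?A)" by (auto simp: Qs_def)
    show "X \<in> insert (star ?A) ((\<lambda>Y. conc (\<Union>Y) (star ?A)) ` Pow (Qs ?A))"
    proof (cases "w = []")
      case True then show ?thesis using X by simp
    next
      case False
      have "{Deriv v ?A | u v. w = u @ v \<and> u \<in> star ?A \<and> v \<noteq> []} \<in> Pow (Qs ?A)"
        by (auto simp: Qs_def)
      then show ?thesis unfolding X Deriv_star[OF False] by (intro insertI2 imageI)
    qed
  qed
  have "finite (Pow (Qs ?A))" using Star.IH by (simp only: finite_Pow_iff)
  then show ?case by (rule finite_subset[OF sub finite.insertI[OF finite_imageI]])
qed

lemma regular_finite_Qs: "regular L \<Longrightarrow> finite (Qs L)"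
  unfolding regular_def using finite_Qs by blast

lemma range_foldl_dd: "range (foldl dd X) = Qs X"
  by (auto simp: foldl_dd Qs_def)

lemma reg_level:
  fixes X :: "('a::finite) list set"
  assumes "finite (Qs X)"
  shows "regular {w. Deriv w X = p}"
  using kleene[of dd X p] assms unfolding range_foldl_dd foldl_dd by simp

lemma reg_Deriv:
  fixes L :: "('a::finite) list set"
  assumes "finite (Qs L)"
  shows "regular (Deriv w L)"
proof -
  have eq: "Deriv w L = (\<Union>t\<in>{t\<in>Qs L. [] \<in> t}. {v. Deriv v (Deriv w L) = t})"
  proof (intro equalityI subsetI)
    fix v assume "v \<in> Deriv w L"
    then have "[] \<in> Deriv v (Deriv w L)" by (simp add: Deriv_def)
    moreover have "Deriv v (Deriv w L) \<in> Qs L"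
      unfolding Qs_def Deriv_append[symmetric] by (rule rangeI)
    ultimately show "v \<in> (\<Union>t\<in>{t\<in>Qs L. [] \<in> t}. {v. Deriv v (Deriv w L) = t})" by blast
  next
    fix v assume "v \<in> (\<Union>t\<in>{t\<in>Qs L. [] \<in> t}. {v. Deriv v (Deriv w L) = t})"
    then have "[] \<in> Deriv v (Deriv w L)" by blast
    then show "v \<in> Deriv w L" by (simp add: Deriv_def)
  qed
  have fin: "finite (Qs (Deriv w L))" using assms Qs_Deriv finite_subset by blast
  have "regular (\<Union>t\<in>{t\<in>Qs L. [] \<in> t}. {v. Deriv v (Deriv w L) = t})"
    by (rule reg_UN) (use assms in simp, rule reg_level[OF fin])
  then show ?thesis using eq by simp
qed

definition dd2 :: "'a list set \<times> 'a list set \<Rightarrow> 'a \<Rightarrow> 'a list set \<times> 'a list set" where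
  "dd2 XY a = (Deriv [a] (fst XY), Deriv [a] (snd XY))"

lemma foldl_dd2: "foldl dd2 (X, Y) w = (Deriv w X, Deriv w Y)"
  by (induction w arbitrary: X Y) (simp_all add: dd2_def Deriv_def)

lemma reg_pair_ne:
  fixes X Y :: "('a::finite) list set"
  assumes "finite (Qs X)" "finite (Qs Y)"
  shows "regular ({w. Deriv w X = p \<and> Deriv w Y = q} - {[]})"
proof -
  have "range (foldl dd2 (X, Y)) \<subseteq> Qs X \<times> Qs Y" by (auto simp: foldl_dd2 Qs_def)
  then have "finite (range (foldl dd2 (X, Y)))" using assms finite_subset by blast
  from kleene_ne[OF this, of "(p, q)"] show ?thesis by (simp add: foldl_dd2)
qed

lemma concE: "z \<in> conc A B \<Longrightarrow> (\<And>x y. z = x @ y \<Longrightarrow> x \<in> A \<Longrightarrow> y \<in> B \<Longrightarrow> P) \<Longrightarrow> P"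
  by (auto simp: conc_def)

lemma reg_Q:
  fixes L :: "('a::finite) list set"
  shows "finite (Qs L) \<Longrightarrow> q \<in> Qs L \<Longrightarrow> regular q"
  unfolding Qs_def using reg_Deriv[unfolded Qs_def] by blast

lemma QD: "p \<in> Qs L \<Longrightarrow> finite (Qs L) \<Longrightarrow> finite (Qs p)"
  unfolding Qs_def by (metis Qs_Deriv Qs_def finite_subset imageE)

lemma QQ: "p \<in> Qs L \<Longrightarrow> Deriv w p \<in> Qs L"
  unfolding Qs_def by (auto simp: Deriv_append[symmetric])

lemma DD: "Deriv w L \<in> Qs L" by (auto simp: Qs_def)

lemma pgi_eq: "pgi_lang L1 L2 = (\<Union>p\<in>Qs L1. \<Union>p'\<in>Qs L1. \<Union>q\<in>Qs L2.
       conc {x. Deriv x L1 = p} (conc ({y. Deriv y p = p' \<and> Deriv y L2 = q} - {[]}) (conc q p')))"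
proof (intro equalityI subsetI)
  fix w assume "w \<in> pgi_lang L1 L2"
  then obtain x1 y1 y2 x2 where w: "w = x1 @ y1 @ y2 @ x2" "x1 @ y1 @ x2 \<in> L1"
    "y1 @ y2 \<in> L2" "y1 \<noteq> []" unfolding pgi_lang_def pgi_def by blast
  define p where "p = Deriv x1 L1"
  define p' where "p' = Deriv y1 p"
  define q where "q = Deriv y1 L2"
  have "x1 \<in> {x. Deriv x L1 = p}" by (simp add: p_def)
  moreover have "y1 \<in> {y. Deriv y p = p' \<and> Deriv y L2 = q} - {[]}" using w(4) by (simp add: p'_def q_def)
  moreover have "y2 \<in> q" using w(3) by (simp add: q_def Deriv_def)
  moreover have "x2 \<in> p'" using w(2) by (simp add: p'_def p_def Deriv_def)
  ultimately have "x1 @ y1 @ y2 @ x2 \<in> conc {x. Deriv x L1 = p} (conc ({y. Deriv y p = p' \<and> Deriv y L2 = q} - {[]}) (conc q p'))"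
    by (intro concI)
  moreover have "p \<in> Qs L1" "p' \<in> Qs L1" "q \<in> Qs L2" unfolding p'_def p_def q_def
    by (rule DD, rule QQ[OF DD], rule DD)
  ultimately show "w \<in> (\<Union>p\<in>Qs L1. \<Union>p'\<in>Qs L1. \<Union>q\<in>Qs L2.
       conc {x. Deriv x L1 = p} (conc ({y. Deriv y p = p' \<and> Deriv y L2 = q} - {[]}) (conc q p')))"
    unfolding w(1) by blast
next
  fix w assume "w \<in> (\<Union>p\<in>Qs L1. \<Union>p'\<in>Qs L1. \<Union>q\<in>Qs L2.
       conc {x. Deriv x L1 = p} (conc ({y. Deriv y p = p' \<and> Deriv y L2 = q} - {[]}) (conc q p')))"
  then obtain p p' q where "w \<in> conc {x. Deriv x L1 = p} (conc ({y. Deriv y p = p' \<and> Deriv y L2 = q} - {[]}) (conc q p'))"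
    by blast
  then obtain x1 y1 y2 x2 where h: "w = x1 @ y1 @ y2 @ x2" "Deriv x1 L1 = p"
    "Deriv y1 p = p'" "Deriv y1 L2 = q" "y1 \<noteq> []" "y2 \<in> q" "x2 \<in> p'"
    by (elim concE) (simp only: mem_Collect_eq Diff_iff singleton_iff, metis)
  have "x1 @ y1 @ x2 \<in> L1" using h by (auto simp: Deriv_def)
  moreover have "y1 @ y2 \<in> L2" using h by (auto simp: Deriv_def)
  ultimately show "w \<in> pgi_lang L1 L2" using h unfolding pgi_lang_def pgi_def by blast
qed

lemma sgi_eq: "sgi_lang L1 L2 = (\<Union>p\<in>Qs L1. \<Union>q\<in>Qs L2. \<Union>p'\<in>Qs L1. \<Union>q'\<in>{t\<in>Qs L2. [] \<in> t}.
       conc {x. Deriv x L1 = p} (conc {y. Deriv y L2 = q}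
         (conc ({y. Deriv y p = p' \<and> Deriv y q = q'} - {[]}) p')))"
proof (intro equalityI subsetI)
  fix w assume "w \<in> sgi_lang L1 L2"
  then obtain x1 y1 y2 x2 where w: "w = x1 @ y1 @ y2 @ x2" "x1 @ y2 @ x2 \<in> L1"
    "y1 @ y2 \<in> L2" "y2 \<noteq> []" unfolding sgi_lang_def sgi_def by blast
  define p where "p = Deriv x1 L1"
  define q where "q = Deriv y1 L2"
  define p' where "p' = Deriv y2 p"
  define q' where "q' = Deriv y2 q"
  have "x1 \<in> {x. Deriv x L1 = p}" by (simp add: p_def)
  moreover have "y1 \<in> {y. Deriv y L2 = q}" by (simp add: q_def)
  moreover have "y2 \<in> {y. Deriv y p = p' \<and> Deriv y q = q'} - {[]}" using w(4) by (simp add: p'_def q'_def)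
  moreover have "x2 \<in> p'" using w(2) by (simp add: p'_def p_def Deriv_def)
  ultimately have "x1 @ y1 @ y2 @ x2 \<in> conc {x. Deriv x L1 = p} (conc {y. Deriv y L2 = q}
         (conc ({y. Deriv y p = p' \<and> Deriv y q = q'} - {[]}) p'))"
    by (intro concI)
  moreover have "p \<in> Qs L1" "q \<in> Qs L2" "p' \<in> Qs L1" "q' \<in> Qs L2"
    unfolding p'_def p_def q_def q'_def by (rule DD, rule DD, rule QQ[OF DD], rule QQ[OF DD])
  moreover have "[] \<in> q'" using w(3) by (simp add: q'_def q_def Deriv_def)
  ultimately show "w \<in> (\<Union>p\<in>Qs L1. \<Union>q\<in>Qs L2. \<Union>p'\<in>Qs L1. \<Union>q'\<in>{t\<in>Qs L2. [] \<in> t}.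
       conc {x. Deriv x L1 = p} (conc {y. Deriv y L2 = q}
         (conc ({y. Deriv y p = p' \<and> Deriv y q = q'} - {[]}) p')))"
    unfolding w(1) by blast
next
  fix w assume "w \<in> (\<Union>p\<in>Qs L1. \<Union>q\<in>Qs L2. \<Union>p'\<in>Qs L1. \<Union>q'\<in>{t\<in>Qs L2. [] \<in> t}.
       conc {x. Deriv x L1 = p} (conc {y. Deriv y L2 = q}
         (conc ({y. Deriv y p = p' \<and> Deriv y q = q'} - {[]}) p')))"
  then obtain p q p' q' where "[] \<in> q'" "w \<in> conc {x. Deriv x L1 = p} (conc {y. Deriv y L2 = q}
         (conc ({y. Deriv y p = p' \<and> Deriv y q = q'} - {[]}) p'))"
    by blast
  then obtain x1 y1 y2 x2 where h: "w = x1 @ y1 @ y2 @ x2" "Deriv x1 L1 = p"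
    "Deriv y1 L2 = q" "Deriv y2 p = p'" "Deriv y2 q = q'" "y2 \<noteq> []" "x2 \<in> p'" "[] \<in> q'"
    by (elim concE) (simp only: mem_Collect_eq Diff_iff singleton_iff, metis)
  have "x1 @ y2 @ x2 \<in> L1" using h by (auto simp: Deriv_def)
  moreover have "y1 @ y2 \<in> L2" using h by (auto simp: Deriv_def)
  ultimately show "w \<in> sgi_lang L1 L2" using h unfolding sgi_lang_def sgi_def by blast
qed

theorem proposition4p3:
  fixes L1 L2 :: "('a::finite) list set"
  assumes "regular L1" and "regular L2"
  shows "regular (pgi_lang L1 L2) \<and> regular (sgi_lang L1 L2)"
proof
  have F1: "finite (Qs L1)" and F2: "finite (Qs L2)"
    using assms regular_finite_Qs by auto
  have F3: "finite {t \<in> Qs L2. [] \<in> t}" using F2 by simp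
  show "regular (pgi_lang L1 L2)" unfolding pgi_eq
  proof (intro reg_UN[OF F1] reg_UN[OF F2])
    fix p p' q assume h: "p \<in> Qs L1" "p' \<in> Qs L1" "q \<in> Qs L2"
    show "regular (conc {x. Deriv x L1 = p} (conc ({y. Deriv y p = p' \<and> Deriv y L2 = q} - {[]}) (conc q p')))"
      by (intro reg_conc reg_level[OF F1] reg_pair_ne[OF QD[OF h(1) F1] F2]
            reg_Q[OF F2 h(3)] reg_Q[OF F1 h(2)])
  qed
  show "regular (sgi_lang L1 L2)" unfolding sgi_eq
  proof (intro reg_UN[OF F1] reg_UN[OF F2] reg_UN[OF F3])
    fix p p' q q' assume h: "p \<in> Qs L1" "q \<in> Qs L2" "p' \<in> Qs L1"
    show "regular (conc {x. Deriv x L1 = p} (conc {y. Deriv y L2 = q}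
         (conc ({y. Deriv y p = p' \<and> Deriv y q = q'} - {[]}) p')))"
      by (intro reg_conc reg_level[OF F1] reg_level[OF F2] reg_pair_ne[OF QD[OF h(1) F1] QD[OF h(2) F2]]
            reg_Q[OF F1 h(3)])
  qed
qed

end
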